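(* Let $s$ be a Lucasian GNS on a ring $D$. Then for all $a\in\mathbf N$ and $b\ge1$, \[ \tilde s_b(a)\equiv a\bmod s(b), \] where $\tilde s_b(a)=s(ab)/s(b)$.
   Context: A generalized $n$-series (GNS) over a ring $D$ is a function $s\colon\mathbf N\to D$ with $s(0)=0$, $s(n)$ a non-zero-divisor for $n>0$, and $s(n-k)\mid s(n)-s(k)$ for $n>k>0$. It is Lucasian if $s(a+b)\equiv s(a)+s(b)\bmod s(a)s(b)$ for all $a,b$. The rescaled GNS is $s_b(n)=s(bn)$ and the reduction of a GNS $t$ is $\tilde t(n)=t(n)/t(1)$; so $\tilde s_b(a)=s(ab)/s(b)$. *)

theory Defs
  imports Main
begin

definition non_zero_divisor :: "'a::comm_ring_1 \<Rightarrow> bool" where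
  "non_zero_divisor d \<longleftrightarrow> (\<forall>x. d * x = 0 \<longrightarrow> x = 0)"

definition GNS :: "(nat \<Rightarrow> 'a::comm_ring_1) \<Rightarrow> bool" where
  "GNS s \<longleftrightarrow> s 0 = 0 \<and> (\<forall>n>0. non_zero_divisor (s n))
     \<and> (\<forall>n k. n > k \<and> k > 0 \<longrightarrow> s (n - k) dvd (s n - s k))"

definition Lucasian :: "(nat \<Rightarrow> 'a::comm_ring_1) \<Rightarrow> bool" where
  "Lucasian s \<longleftrightarrow> GNS s \<and>
     (\<forall>a b. s a * s b dvd (s (a + b) - (s a + s b)))"

(* exact quotient x / y in the ring: the unique q with y * q = x
   (unique when y is a non-zero-divisor and y divides x) *)
definition rdiv :: "'a::comm_ring_1 \<Rightarrow> 'a \<Rightarrow> 'a" where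
  "rdiv x y = (THE q. y * q = x)"

definition rescale :: "(nat \<Rightarrow> 'a::comm_ring_1) \<Rightarrow> nat \<Rightarrow> nat \<Rightarrow> 'a" where
  "rescale s b n = s (b * n)"

definition reduction :: "(nat \<Rightarrow> 'a::comm_ring_1) \<Rightarrow> nat \<Rightarrow> 'a" where
  "reduction t n = rdiv (t n) (t 1)"

end

theory Submission
  imports Defs
begin

lemma aux:
  fixes s :: "nat \<Rightarrow> 'a::comm_ring_1"
  assumes "Lucasian s"
  shows "\<exists>q. s (a*b) = s b * q \<and> s b dvd (q - of_nat a)"
proof (induction a)
  case 0
  have "s 0 = 0" using assms by (simp add: Lucasian_def GNS_def)
  then show ?case by (intro exI[of _ 0]) simp
next
  case (Suc a)
  then obtain q where q: "s (a*b) = s b * q" and d: "s b dvd (q - of_nat a)" by blast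
  obtain m where m: "q - of_nat a = s b * m" using d by blast
  have "s (a*b) * s b dvd (s (a*b + b) - (s (a*b) + s b))"
    using assms by (simp add: Lucasian_def)
  then obtain k where k: "s (a*b + b) - (s (a*b) + s b) = s (a*b) * s b * k" by blast
  have e: "s (Suc a * b) = s b * (q + 1 + q * s b * k)"
    using k q by (simp add: algebra_simps add.commute eq_diff_eq)
  have "q + 1 + q * s b * k - of_nat (Suc a) = s b * (m + q * k)"
    using m by (simp add: algebra_simps eq_diff_eq)
  then show ?case using e by (intro exI[of _ "q + 1 + q * s b * k"]) auto
qed

theorem lemma5p11:
  fixes s :: "nat \<Rightarrow> 'a::comm_ring_1" and a b :: nat
  assumes "Lucasian s"
    and "b \<ge> 1"
  shows "s b dvd (reduction (rescale s b) a - of_nat a)"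
proof -
  obtain q where q: "s (a*b) = s b * q" and d: "s b dvd (q - of_nat a)"
    using aux[OF assms(1)] by blast
  have nz: "non_zero_divisor (s b)" using assms by (simp add: Lucasian_def GNS_def)
  have "(THE x. s b * x = s (b*a)) = q"
  proof (rule the_equality)
    show "s b * q = s (b*a)" using q by (simp add: mult.commute)
  next
    fix x assume "s b * x = s (b*a)"
    then have "s b * (x - q) = 0" using q by (simp add: algebra_simps mult.commute)
    then show "x = q" using nz unfolding non_zero_divisor_def by auto
  qed
  then have "reduction (rescale s b) a = q"
    by (simp add: reduction_def rescale_def rdiv_def)
  then show ?thesis using d by simp
qed

end
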